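(* Let $b\in\mathbb{N}_{>0}$, $\mathbf{x}=(x_1,\dots,x_b)\in\{0,1\}^b$ and $\gamma_{\mathbf{x}}=\sum_{k=1}^{b}\frac{x_k}{4^k}$. Then $\gamma_{\mathbf{x}}\in[0,\tfrac13]$, and for every integer $j>0$: if $j>b$ then $\sin\!\big(4^j\tfrac{\pi}{2}\gamma_{\mathbf{x}}\big)=0$; if $j\leq b$ and $x_j=1$ then $\sin\!\big(4^j\tfrac{\pi}{2}\gamma_{\mathbf{x}}\big)\geq\tfrac23$; and if $j\leq b$ and $x_j=0$ then $\sin\!\big(4^j\tfrac{\pi}{2}\gamma_{\mathbf{x}}\big)\leq\tfrac12$. *)

theory Defs
  imports Complex_Main
begin

end

theory Submission
  imports Defs
begin

lemma tail4:
  fixes a :: "nat \<Rightarrow> real"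
  assumes a: "\<forall>k. 0 \<le> a k \<and> a k \<le> 1" and mn: "m \<le> n"
  shows "(\<Sum>k\<in>{m<..n}. a k / 4^(k-m)) \<le> 1/3 - (1/4)^(n-m)/3"
  using mn
proof (induction n rule: dec_induct)
  case base
  then show ?case by simp
next
  case (step n)
  have e: "{m<..Suc n} = insert (Suc n) {m<..n}" using step.hyps by auto
  have s: "Suc n - m = Suc (n - m)" using step.hyps by simp
  have "a (Suc n) / 4^(Suc n - m) \<le> 1 / 4^(Suc n - m)"
    using a by (simp add: divide_right_mono)
  also have "\<dots> = (1/4)^(n-m)/4" using s by (simp add: power_divide)
  finally have t: "a (Suc n) / 4^(Suc n - m) \<le> (1/4)^(n-m)/4" .
  have "(\<Sum>k\<in>{m<..Suc n}. a k / 4^(k-m)) = a (Suc n) / 4^(Suc n - m) + (\<Sum>k\<in>{m<..n}. a k / 4^(k-m))"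
    unfolding e by simp
  also have "\<dots> \<le> (1/4)^(n-m)/4 + (1/3 - (1/4)^(n-m)/3)" using t step.IH by linarith
  also have "\<dots> = 1/3 - (1/4)^(Suc n - m)/3" using s by simp
  finally show ?case .
qed

lemma tail_nonneg:
  fixes a :: "nat \<Rightarrow> real"
  assumes a: "\<forall>k. 0 \<le> a k \<and> a k \<le> 1"
  shows "0 \<le> (\<Sum>k\<in>{m<..n}. a k / 4^(k-m))"
  using a by (intro sum_nonneg) auto

lemma tail_le:
  fixes a :: "nat \<Rightarrow> real"
  assumes a: "\<forall>k. 0 \<le> a k \<and> a k \<le> 1"
  shows "(\<Sum>k\<in>{m<..n}. a k / 4^(k-m)) \<le> 1/3"
proof (cases "m \<le> n")
  case True
  have "(0::real) \<le> (1/4)^(n-m)/3" by simp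
  then show ?thesis using tail4[OF a True] by linarith
next
  case False
  then show ?thesis by simp
qed

theorem lemma1:
  fixes b :: nat and x :: "nat \<Rightarrow> nat" and \<gamma> :: real
  assumes "b > 0"
    and "\<forall>k\<in>{1..b}. x k \<in> {0, 1}"
    and "\<gamma> = (\<Sum>k=1..b. real (x k) / 4 ^ k)"
  shows "\<gamma> \<in> {0..1/3} \<and>
    (\<forall>j::nat. j > 0 \<longrightarrow>
       (j > b \<longrightarrow> sin (4 ^ j * (pi / 2) * \<gamma>) = 0) \<and>
       (j \<le> b \<and> x j = 1 \<longrightarrow> sin (4 ^ j * (pi / 2) * \<gamma>) \<ge> 2/3) \<and>
       (j \<le> b \<and> x j = 0 \<longrightarrow> sin (4 ^ j * (pi / 2) * \<gamma>) \<le> 1/2))"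
proof -
  define a where "a k = min 1 (real (x k))" for k
  have a01: "\<forall>k. 0 \<le> a k \<and> a k \<le> 1" by (simp add: a_def)
  have ax: "a k = real (x k)" if "k \<in> {1..b}" for k
  proof -
    have "x k = 0 \<or> x k = 1" using assms(2) that by auto
    then show ?thesis by (auto simp: a_def)
  qed
  have ivl: "{1..b} = {0<..b}" by auto
  have g: "\<gamma> = (\<Sum>k\<in>{0<..b}. a k / 4 ^ (k - 0))"
    unfolding assms(3) ivl by (intro sum.cong) (auto simp: ax)
  have g1: "\<gamma> \<in> {0..1/3}"
    using tail_le[OF a01, of 0 b] tail_nonneg[OF a01, of 0 b] g by simp
  have main: "\<exists>N::nat. 4 ^ j * \<gamma> = 4 * real N + (if j \<le> b then real (x j) else 0)
                + (\<Sum>k\<in>{j<..b}. a k / 4^(k-j))" if j0: "j > 0" for j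
  proof -
    define N where "N = (\<Sum>k\<in>{1..b} \<inter> {..<j}. x k * 4^(j-k-1))"
    have split: "{1..b} = ({1..b} \<inter> {..<j}) \<union> ({1..b} \<inter> {j..})" by auto
    have up: "{1..b} \<inter> {j..} = (if j \<le> b then insert j {j<..b} else {})"
      using j0 by auto
    have "4 ^ j * \<gamma> = (\<Sum>k\<in>{1..b}. real (x k) * 4^j / 4 ^ k)"
      unfolding assms(3) by (simp add: sum_distrib_left mult.commute)
    also have "\<dots> = (\<Sum>k\<in>{1..b} \<inter> {..<j}. real (x k) * 4^j / 4 ^ k)
        + (\<Sum>k\<in>{1..b} \<inter> {j..}. real (x k) * 4^j / 4 ^ k)"
      by (subst split, rule sum.union_disjoint) auto
    also have "(\<Sum>k\<in>{1..b} \<inter> {..<j}. real (x k) * 4^j / 4 ^ k) = 4 * real N"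
    proof -
      have "real (x k) * 4^j / 4 ^ k = 4 * real (x k * 4^(j-k-1))" if "k < j" for k
      proof -
        have "(4::real)^j = 4^k * 4 * 4^(j-k-1)"
          using that by (metis Suc_diff_Suc diff_Suc_1 le_add_diff_inverse less_imp_le_nat
              mult.assoc power_Suc power_add)
        then show ?thesis by simp
      qed
      then show ?thesis unfolding N_def by (simp add: sum_distrib_left)
    qed
    also have "(\<Sum>k\<in>{1..b} \<inter> {j..}. real (x k) * 4^j / 4 ^ k) =
        (if j \<le> b then real (x j) else 0) + (\<Sum>k\<in>{j<..b}. a k / 4^(k-j))"
    proof -
      have t: "(\<Sum>k\<in>{j<..b}. real (x k) * 4^j / 4 ^ k) = (\<Sum>k\<in>{j<..b}. a k / 4^(k-j))"
      proof (intro sum.cong refl)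
        fix k assume k: "k \<in> {j<..b}"
        then have "k \<in> {1..b}" using j0 by auto
        have "(4::real)^k = 4^j * 4^(k-j)" using k
          by (metis greaterThanAtMost_iff le_add_diff_inverse less_imp_le_nat power_add)
        then show "real (x k) * 4^j / 4 ^ k = a k / 4^(k-j)" using ax[OF \<open>k \<in> {1..b}\<close>] by simp
      qed
      show ?thesis
      proof (cases "j \<le> b")
        case True
        then show ?thesis unfolding up using t by simp
      next
        case False
        then show ?thesis unfolding up by simp
      qed
    qed
    finally show ?thesis by (metis add.assoc)
  qed
  have per: "sin (4 * real N * (pi/2) + y) = sin y" for N :: nat and y
  proof -
    have "4 * real N * (pi/2) = real (2*N) * pi" by simp
    moreover have "sin (real (2*N) * pi) = 0" by (rule sin_npi)
    moreover have "cos (real (2*N) * pi) = 1" by (simp only: cos_npi power_mult) simp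
    ultimately show ?thesis by (simp only: sin_add)
  qed
  have rest: "sin (4 ^ j * (pi / 2) * \<gamma>) = sin ((pi/2) * ((if j \<le> b then real (x j) else 0)
                + (\<Sum>k\<in>{j<..b}. a k / 4^(k-j))))" if jpos: "j > 0" for j
  proof -
    obtain N :: nat where N: "4 ^ j * \<gamma> = 4 * real N + (if j \<le> b then real (x j) else 0)
                + (\<Sum>k\<in>{j<..b}. a k / 4^(k-j))" using main[OF jpos] by blast
    have E: "4 ^ j * (pi / 2) * \<gamma> = 4 * real N * (pi/2) + (pi/2) * ((if j \<le> b then real (x j) else 0)
                + (\<Sum>k\<in>{j<..b}. a k / 4^(k-j)))"
      using arg_cong[OF N, of "\<lambda>t. t * (pi/2)"] by (simp add: algebra_simps)
    show ?thesis unfolding E by (rule per)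
  qed
  show ?thesis
  proof (intro conjI g1 allI impI)
    fix j :: nat assume j: "j > 0"
    define t where "t = (\<Sum>k\<in>{j<..b}. a k / 4^(k-j))"
    have t0: "0 \<le> t" and t1: "t \<le> 1/3" unfolding t_def
      using tail_le[OF a01] tail_nonneg[OF a01] by auto
    have r: "sin (4 ^ j * (pi / 2) * \<gamma>) = sin ((pi/2) * ((if j \<le> b then real (x j) else 0) + t))"
      using rest[OF j] t_def by simp
    { assume "b < j"
      then have "t = 0" unfolding t_def by simp
      then show "sin (4 ^ j * (pi / 2) * \<gamma>) = 0" using r \<open>b < j\<close> by simp }
    { assume h: "j \<le> b \<and> x j = 1"
      then have "sin (4 ^ j * (pi / 2) * \<gamma>) = cos ((pi/2) * t)"
        using r by (simp add: distrib_left sin_add)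
      also have "cos ((pi/2) * t) \<ge> cos (pi/6)"
        using t0 t1 by (intro cos_monotone_0_pi_le) (auto simp: mult_nonneg_nonneg)
      finally have "sin (4 ^ j * (pi / 2) * \<gamma>) \<ge> sqrt 3 / 2" by (simp add: cos_30)
      moreover have "sqrt 3 / 2 \<ge> (2/3::real)"
      proof -
        have "(4/3::real) \<le> sqrt 3" by (rule real_le_rsqrt) (simp add: power2_eq_square)
        then show ?thesis by simp
      qed
      ultimately show "sin (4 ^ j * (pi / 2) * \<gamma>) \<ge> 2/3" by linarith }
    { assume h: "j \<le> b \<and> x j = 0"
      then have "sin (4 ^ j * (pi / 2) * \<gamma>) = sin ((pi/2) * t)" using r by simp
      also have "\<dots> \<le> sin (pi/6)"
      proof (rule sin_monotone_2pi_le)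
        have "0 \<le> (pi/2) * t" using t0 pi_gt_zero by simp
        moreover have "(pi/2) * t \<le> (pi/2) * (1/3)" using t1 pi_gt_zero by (intro mult_left_mono) auto
        moreover have "(0::real) < pi" by (rule pi_gt_zero)
        ultimately show "- (pi/2) \<le> (pi/2) * t" "(pi/2) * t \<le> pi/6" "pi/6 \<le> pi/2"
          by linarith+
      qed
      finally show "sin (4 ^ j * (pi / 2) * \<gamma>) \<le> 1/2" by (simp add: sin_30) }
  qed
qed

end
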